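(* Let $P$ be a finite poset and let $P_{\chi} \subseteq P$ be a $\chi$-minimal model of $P$. If $h, h' : P \to \mathbb{Z}$ are functions whose restrictions to $P_{\chi}$ coincide, $h|_{P_\chi} = h'|_{P_\chi}$, then \[ \int_{P} h \, d\chi = \int_{P} h' \, d\chi . \]
   Context: For a finite poset $P$, the zeta function is the $P \times P$ matrix with $\zeta(x,y)=1$ if $x \le y$ and $0$ otherwise; it is invertible, and the Euler characteristic of $P$ is $\chi(P) = \sum_{x,y \in P} \zeta^{-1}(x,y)$ ($\chi(\emptyset)=0$). A filter of $P$ is an upward-closed subset. For a subset $Q$, $\delta_Q$ denotes its indicator function. Every $f : P \to \mathbb{Z}$ can be written as $f = \sum_i a_i \delta_{Q_i}$ with $a_i \in \mathbb{Z}$ and $Q_i$ filters; the Euler calculus of $f$ is $\int_P f\, d\chi = \sum_i a_i \chi(Q_i)$, independent of the representation. A point $x$ of a finite poset $R$ is a $\chi$-point of $R$ if $\chi(R_{>x}) = 1$, where $R_{>x} = \{y \in R \mid y > x\}$. A $\chi$-minimal model of $P$ is a subposet (with the induced order) obtained from $P$ by repeatedly removing one point that is a $\chi$-point of the current subposet, until the current subposet has no $\chi$-points. *)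

theory Defs
  imports Main
begin

definition zeta :: "'a::order \<Rightarrow> 'a \<Rightarrow> int" where
  "zeta x y = (if x \<le> y then 1 else 0)"

definition zeta_inv :: "'a::order set \<Rightarrow> 'a \<Rightarrow> 'a \<Rightarrow> int" where
  "zeta_inv P = (THE m. (\<forall>x\<in>P. \<forall>y\<in>P. (\<Sum>z\<in>P. zeta x z * m z y) = (if x = y then 1 else 0))
                      \<and> (\<forall>x y. (x \<notin> P \<or> y \<notin> P) \<longrightarrow> m x y = 0))"

definition euler_char :: "'a::order set \<Rightarrow> int" where
  "euler_char P = (\<Sum>x\<in>P. \<Sum>y\<in>P. zeta_inv P x y)"

definition is_filter :: "'a::order set \<Rightarrow> 'a set \<Rightarrow> bool" where
  "is_filter P Q \<longleftrightarrow> Q \<subseteq> P \<and> (\<forall>x\<in>Q. \<forall>y\<in>P. x \<le> y \<longrightarrow> y \<in> Q)"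

definition indicator_fun :: "'a set \<Rightarrow> 'a \<Rightarrow> int" where
  "indicator_fun Q x = (if x \<in> Q then 1 else 0)"

definition euler_integral :: "'a::order set \<Rightarrow> ('a \<Rightarrow> int) \<Rightarrow> int" where
  "euler_integral P f = (THE c. \<exists>rep :: (int \<times> 'a set) list.
      (\<forall>(a, Q) \<in> set rep. is_filter P Q)
      \<and> (\<forall>x\<in>P. f x = (\<Sum>(a, Q) \<leftarrow> rep. a * indicator_fun Q x))
      \<and> c = (\<Sum>(a, Q) \<leftarrow> rep. a * euler_char Q))"

definition chi_point :: "'a::order set \<Rightarrow> 'a \<Rightarrow> bool" where
  "chi_point R x \<longleftrightarrow> x \<in> R \<and> euler_char {y \<in> R. y > x} = 1"

inductive chi_reduction :: "'a::order set \<Rightarrow> 'a set \<Rightarrow> bool" for P where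
  refl: "chi_reduction P P"
| step: "chi_reduction P R \<Longrightarrow> chi_point R x \<Longrightarrow> chi_reduction P (R - {x})"

definition chi_minimal_model :: "'a::order set \<Rightarrow> 'a set \<Rightarrow> bool" where
  "chi_minimal_model P M \<longleftrightarrow> chi_reduction P M \<and> \<not> (\<exists>x. chi_point M x)"

end

theory Submission
  imports Defs
begin

definition inv_pred :: "'a::order set \<Rightarrow> ('a \<Rightarrow> 'a \<Rightarrow> int) \<Rightarrow> bool" where
  "inv_pred P m \<longleftrightarrow> (\<forall>x\<in>P. \<forall>y\<in>P. (\<Sum>z\<in>P. zeta x z * m z y) = (if x = y then 1 else 0))
                      \<and> (\<forall>x y. (x \<notin> P \<or> y \<notin> P) \<longrightarrow> m x y = 0)"

definition rs :: "'a::order set \<Rightarrow> 'a \<Rightarrow> int" where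
  "rs S z = (\<Sum>x\<in>S. zeta_inv S z x)"

lemma zeta_sum:
  fixes x :: "'a::order"
  assumes "finite S" "x \<in> S"
  shows "(\<Sum>z\<in>S. zeta x z * g z) = g x + (\<Sum>z\<in>{z\<in>S. x<z}. g z)"
proof -
  have "(\<Sum>z\<in>S. zeta x z * g z) = (\<Sum>z\<in>S. if x \<le> z then g z else 0)" by (intro sum.cong) (auto simp: zeta_def)
  also have "\<dots> = (\<Sum>z\<in>{z\<in>S. x \<le> z}. g z)" using assms(1) by (simp add: sum.inter_filter)
  also have "{z\<in>S. x \<le> z} = insert x {z\<in>S. x<z}" using assms(2) by auto
  then have "(\<Sum>z\<in>{z\<in>S. x \<le> z}. g z) = (\<Sum>z\<in>insert x {z\<in>S. x<z}. g z)" by simp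
  also have "\<dots> = g x + (\<Sum>z\<in>{z\<in>S. x<z}. g z)" using assms(1) by (simp add: sum.insert)
  finally show ?thesis .
qed

lemma down_induct:
  fixes y :: "'a::order"
  assumes "finite S" "y \<in> S" "\<And>y. y \<in> S \<Longrightarrow> (\<And>z. z \<in> S \<Longrightarrow> y < z \<Longrightarrow> P z) \<Longrightarrow> P y"
  shows "P y"
proof -
  have "y \<in> S \<longrightarrow> P y"
  proof (induction y rule: measure_induct_rule[where f="\<lambda>y. card {z\<in>S. y<z}"])
    case (less y)
    show ?case
    proof
      assume "y\<in>S"
      show "P y"
      proof (rule assms(3)[OF \<open>y\<in>S\<close>])
        fix z assume "z\<in>S" "y<z"
        have "{w\<in>S. z<w} \<subset> {w\<in>S. y<w}" using \<open>z\<in>S\<close> \<open>y<z\<close> by (auto intro: less_trans)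
        then have "card {w\<in>S. z<w} < card {w\<in>S. y<w}" using assms(1) by (simp add: psubset_card_mono)
        then show "P z" using less \<open>z\<in>S\<close> by blast
      qed
    qed
  qed
  then show ?thesis using assms(2) by blast
qed

lemma inv_exists: "finite (S::'a::order set) \<Longrightarrow> \<exists>m. inv_pred S m"
proof (induction "card S" arbitrary: S rule: less_induct)
  case less
  show ?case
  proof (cases "S = {}")
    case True then show ?thesis by (intro exI[of _ "\<lambda>x y. 0"]) (auto simp: inv_pred_def)
  next
    case False
    obtain a where a: "a\<in>S" "\<And>z. z\<in>S \<Longrightarrow> z \<le> a \<Longrightarrow> a = z"
      using finite_has_minimal[OF less.prems False] by blast
    define S' where "S' = S - {a}"
    have fS': "finite S'" using less.prems S'_def by simp
    have "card S' < card S" unfolding S'_def by (rule card_Diff1_less[OF less.prems a(1)])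
    then obtain m' where m': "inv_pred S' m'" using less.hyps fS' by blast
    have m'0: "m' x y = 0" if "x \<notin> S' \<or> y \<notin> S'" for x y using m' that by (simp add: inv_pred_def)
    have m'eq: "(\<Sum>z\<in>S'. zeta x z * m' z y) = (if x = y then 1 else 0)" if "x\<in>S'" "y\<in>S'" for x y
      using m' that by (simp add: inv_pred_def)
    define m where "m x y = (if x \<in> S' then m' x y else if x = a \<and> y \<in> S then
       (if y = a then 1 else 0) - (\<Sum>z\<in>{z\<in>S'. a<z}. m' z y) else 0)" for x y
    have "inv_pred S m"
      unfolding inv_pred_def
    proof (intro conjI ballI allI impI)
      fix x y assume "x \<notin> S \<or> y \<notin> S"
      then show "m x y = 0" unfolding m_def using m'0 S'_def a(1) by auto
    next
      fix x y assume x: "x\<in>S" and y: "y\<in>S"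
      show "(\<Sum>z\<in>S. zeta x z * m z y) = (if x = y then 1 else 0)"
      proof (cases "x = a")
        case True
        have e1: "{z\<in>S. a<z} = {z\<in>S'. a<z}" using S'_def by auto
        have "(\<Sum>z\<in>{z\<in>S. a<z}. m z y) = (\<Sum>z\<in>{z\<in>S'. a<z}. m' z y)"
          unfolding e1 by (rule sum.cong) (auto simp: m_def)
        moreover have "m a y = (if a = y then 1 else 0) - (\<Sum>z\<in>{z\<in>S'. a<z}. m' z y)"
          using y S'_def by (auto simp: m_def)
        ultimately show ?thesis using zeta_sum[OF less.prems a(1), of "\<lambda>z. m z y"] True by simp
      next
        case False
        then have xS': "x \<in> S'" using x S'_def by simp
        have za: "zeta x a = 0" using a(2)[OF x] False by (auto simp: zeta_def)
        have "(\<Sum>z\<in>S. zeta x z * m z y) = zeta x a * m a y + (\<Sum>z\<in>S'. zeta x z * m z y)"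
          using sum.remove[OF less.prems a(1)] S'_def by blast
        also have "\<dots> = (\<Sum>z\<in>S'. zeta x z * m' z y)" using za by (simp add: m_def)
        also have "\<dots> = (if x = y then 1 else 0)"
        proof (cases "y \<in> S'")
          case True then show ?thesis using m'eq xS' by simp
        next
          case False
          then have "y = a" using y S'_def by simp
          then show ?thesis using m'0 False xS' by (auto simp: S'_def)
        qed
        finally show ?thesis .
      qed
    qed
    then show ?thesis by blast
  qed
qed

lemma inv_unique:
  assumes "finite (S::'a::order set)" "inv_pred S m" "inv_pred S m'"
  shows "m = m'"
proof (intro ext)
  fix x y
  show "m x y = m' x y"
  proof (cases "x \<in> S \<and> y \<in> S")
    case False then show ?thesis using assms by (auto simp: inv_pred_def)
  next
    case True
    then have y: "y \<in> S" by simp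
    show ?thesis
    proof (rule down_induct[OF assms(1), of x "\<lambda>x. m x y = m' x y"])
      show "x \<in> S" using True by simp
    next
      fix x assume x: "x \<in> S" and IH: "\<And>z. z \<in> S \<Longrightarrow> x < z \<Longrightarrow> m z y = m' z y"
      have "m x y + (\<Sum>z\<in>{z\<in>S. x<z}. m z y) = (if x = y then 1 else 0)"
        using assms(2) x y zeta_sum[OF assms(1) x, of "\<lambda>z. m z y"] by (simp add: inv_pred_def)
      moreover have "m' x y + (\<Sum>z\<in>{z\<in>S. x<z}. m' z y) = (if x = y then 1 else 0)"
        using assms(3) x y zeta_sum[OF assms(1) x, of "\<lambda>z. m' z y"] by (simp add: inv_pred_def)
      moreover have "(\<Sum>z\<in>{z\<in>S. x<z}. m z y) = (\<Sum>z\<in>{z\<in>S. x<z}. m' z y)"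
        using IH by (intro sum.cong) auto
      ultimately show "m x y = m' x y" by linarith
    qed
  qed
qed

lemma zeta_inv_pred: "finite (S::'a::order set) \<Longrightarrow> inv_pred S (zeta_inv S)"
proof -
  assume f: "finite S"
  have "zeta_inv S = (THE m. inv_pred S m)" by (simp add: zeta_inv_def inv_pred_def)
  moreover have "\<exists>!m. inv_pred S m" using inv_exists[OF f] inv_unique[OF f] by blast
  ultimately show ?thesis using theI' by metis
qed

lemma mu_rec:
  assumes "finite (S::'a::order set)" "x\<in>S" "y\<in>S"
  shows "zeta_inv S x y + (\<Sum>z\<in>{z\<in>S. x<z}. zeta_inv S z y) = (if x=y then 1 else 0)"
  using zeta_inv_pred[OF assms(1)] assms zeta_sum[OF assms(1,2), of "\<lambda>z. zeta_inv S z y"]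
  by (simp add: inv_pred_def)

lemma mu_out: "finite (S::'a::order set) \<Longrightarrow> x \<notin> S \<or> y \<notin> S \<Longrightarrow> zeta_inv S x y = 0"
proof -
  assume f: "finite S" and o: "x \<notin> S \<or> y \<notin> S"
  show ?thesis using zeta_inv_pred[OF f] o unfolding inv_pred_def by blast
qed

lemma mu_zero:
  assumes "finite (S::'a::order set)" "\<not> x \<le> y"
  shows "zeta_inv S x y = 0"
proof (cases "x \<in> S \<and> y \<in> S")
  case False then show ?thesis using mu_out[OF assms(1)] by blast
next
  case True
  then have y: "y\<in>S" by simp
  have "\<not> x \<le> y \<longrightarrow> zeta_inv S x y = 0"
  proof (rule down_induct[OF assms(1), of x])
    show "x\<in>S" using True by simp
  next
    fix x assume x: "x\<in>S" and IH: "\<And>z. z \<in> S \<Longrightarrow> x < z \<Longrightarrow> \<not> z \<le> y \<longrightarrow> zeta_inv S z y = 0"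
    show "\<not> x \<le> y \<longrightarrow> zeta_inv S x y = 0"
    proof
      assume nx: "\<not> x \<le> y"
      have "(\<Sum>z\<in>{z\<in>S. x<z}. zeta_inv S z y) = 0"
        using IH nx by (intro sum.neutral) (auto dest: less_le_trans)
      then show "zeta_inv S x y = 0" using mu_rec[OF assms(1) x y] nx by auto
    qed
  qed
  then show ?thesis using assms(2) by blast
qed

lemma mu_filter:
  assumes "finite (S::'a::order set)" "is_filter S Q" "x\<in>Q" "y\<in>Q"
  shows "zeta_inv Q x y = zeta_inv S x y"
proof -
  have QS: "Q \<subseteq> S" and up: "\<And>a b. a\<in>Q \<Longrightarrow> b\<in>S \<Longrightarrow> a \<le> b \<Longrightarrow> b\<in>Q"
    using assms(2) by (auto simp: is_filter_def)
  have fQ: "finite Q" using QS assms(1) finite_subset by blast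
  define m where "m x y = (if x\<in>Q \<and> y\<in>Q then zeta_inv S x y else 0)" for x y
  have "inv_pred Q m" unfolding inv_pred_def
  proof (intro conjI ballI allI impI)
    fix a b assume "a \<notin> Q \<or> b \<notin> Q" then show "m a b = 0" by (auto simp: m_def)
  next
    fix a b assume a: "a\<in>Q" and b: "b\<in>Q"
    have "(\<Sum>z\<in>Q. zeta a z * m z b) = (\<Sum>z\<in>Q. zeta a z * zeta_inv S z b)"
      using b by (intro sum.cong) (auto simp: m_def)
    also have "\<dots> = (\<Sum>z\<in>S. zeta a z * zeta_inv S z b)"
      using up a by (intro sum.mono_neutral_left[OF assms(1) QS]) (auto simp: zeta_def)
    also have "\<dots> = (if a = b then 1 else 0)"
    proof -
      have aS: "a\<in>S" "b\<in>S" using a b QS by auto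
      then show ?thesis using zeta_inv_pred[OF assms(1)] unfolding inv_pred_def by blast
    qed
    finally show "(\<Sum>z\<in>Q. zeta a z * m z b) = (if a = b then 1 else 0)" .
  qed
  then have "zeta_inv Q = m" using inv_unique[OF fQ] zeta_inv_pred[OF fQ] by blast
  then show ?thesis using assms(3,4) by (simp add: m_def)
qed

lemma rs_filter:
  assumes "finite (S::'a::order set)" "is_filter S Q" "z\<in>Q"
  shows "rs S z = rs Q z"
proof -
  have QS: "Q \<subseteq> S" and up: "\<And>a b. a\<in>Q \<Longrightarrow> b\<in>S \<Longrightarrow> a \<le> b \<Longrightarrow> b\<in>Q"
    using assms(2) by (auto simp: is_filter_def)
  have "rs S z = (\<Sum>x\<in>Q. zeta_inv S z x)" unfolding rs_def
    using up assms(3) mu_zero[OF assms(1)] by (intro sum.mono_neutral_right[OF assms(1) QS]) blast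
  also have "\<dots> = rs Q z" unfolding rs_def using mu_filter[OF assms(1,2,3)] by simp
  finally show ?thesis .
qed

lemma chi_filter:
  assumes "finite (S::'a::order set)" "is_filter S Q"
  shows "euler_char Q = (\<Sum>z\<in>Q. rs S z)"
  unfolding euler_char_def using rs_filter[OF assms] by (simp add: rs_def)

lemma filter_gt: "is_filter S {z\<in>S. (y::'a::order) < z}"
  by (auto simp: is_filter_def dest: less_le_trans)

lemma filter_ge: "is_filter S {z\<in>S. (y::'a::order) \<le> z}"
  by (auto simp: is_filter_def dest: order_trans)

lemma rs_formula:
  assumes "finite (S::'a::order set)" "y\<in>S"
  shows "rs S y = 1 - euler_char {z\<in>S. y<z}"
proof -
  let ?T = "{z\<in>S. y<z}"
  have "rs S y = (\<Sum>x\<in>S. (if y = x then 1 else 0) - (\<Sum>z\<in>?T. zeta_inv S z x))"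
    unfolding rs_def using mu_rec[OF assms(1,2)] by (intro sum.cong) (auto simp: algebra_simps)
  also have "\<dots> = 1 - (\<Sum>x\<in>S. \<Sum>z\<in>?T. zeta_inv S z x)"
    using assms by (simp add: sum_subtractf)
  also have "(\<Sum>x\<in>S. \<Sum>z\<in>?T. zeta_inv S z x) = (\<Sum>z\<in>?T. rs S z)"
    unfolding rs_def by (rule sum.swap)
  also have "\<dots> = euler_char ?T" using chi_filter[OF assms(1) filter_gt] by simp
  finally show ?thesis .
qed

lemma chi_rec:
  assumes "finite (S::'a::order set)"
  shows "euler_char S = (\<Sum>y\<in>S. 1 - euler_char {z\<in>S. y<z})"
proof -
  have "euler_char S = (\<Sum>y\<in>S. rs S y)" by (simp add: euler_char_def rs_def)
  also have "\<dots> = (\<Sum>y\<in>S. 1 - euler_char {z\<in>S. y<z})"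
    using rs_formula[OF assms] by (intro sum.cong) auto
  finally show ?thesis .
qed

lemma rep_sum:
  "(\<Sum>(a, Q)\<leftarrow>rep. a * (\<Sum>y\<in>R. indicator_fun Q y * g y))
     = (\<Sum>y\<in>R. (\<Sum>(a, Q)\<leftarrow>rep. a * indicator_fun Q y) * g y)"
proof (induction rep)
  case Nil show ?case by simp
next
  case (Cons p rep)
  obtain a Q where p: "p = (a, Q)" by (cases p)
  have "(\<Sum>(a, Q)\<leftarrow>p#rep. a * (\<Sum>y\<in>R. indicator_fun Q y * g y))
      = a * (\<Sum>y\<in>R. indicator_fun Q y * g y) + (\<Sum>(a, Q)\<leftarrow>rep. a * (\<Sum>y\<in>R. indicator_fun Q y * g y))"
    by (simp add: p)
  also have "\<dots> = (\<Sum>y\<in>R. a * indicator_fun Q y * g y) + (\<Sum>y\<in>R. (\<Sum>(a, Q)\<leftarrow>rep. a * indicator_fun Q y) * g y)"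
    using Cons.IH by (simp add: sum_distrib_left mult.assoc)
  also have "\<dots> = (\<Sum>y\<in>R. (a * indicator_fun Q y + (\<Sum>(a, Q)\<leftarrow>rep. a * indicator_fun Q y)) * g y)"
    by (simp add: sum.distrib[symmetric] distrib_right)
  also have "\<dots> = (\<Sum>y\<in>R. (\<Sum>(a, Q)\<leftarrow>p#rep. a * indicator_fun Q y) * g y)"
    by (simp add: p)
  finally show ?case .
qed

lemma rep_value:
  assumes "finite (R::'a::order set)" "\<forall>(a,Q)\<in>set rep. is_filter R Q"
    "\<forall>x\<in>R. f x = (\<Sum>(a, Q)\<leftarrow>rep. a * indicator_fun Q x)"
  shows "(\<Sum>(a, Q)\<leftarrow>rep. a * euler_char Q) = (\<Sum>y\<in>R. f y * rs R y)"
proof -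
  have chiQ: "euler_char Q = (\<Sum>y\<in>R. indicator_fun Q y * rs R y)" if "is_filter R Q" for Q
  proof -
    have QR: "Q \<subseteq> R" using that by (simp add: is_filter_def)
    have "(\<Sum>y\<in>R. indicator_fun Q y * rs R y) = (\<Sum>y\<in>Q. indicator_fun Q y * rs R y)"
      by (rule sum.mono_neutral_right[OF assms(1) QR]) (auto simp: indicator_fun_def)
    also have "\<dots> = (\<Sum>y\<in>Q. rs R y)" by (simp add: indicator_fun_def)
    finally show ?thesis using chi_filter[OF assms(1) that] by simp
  qed
  have "(\<Sum>(a, Q)\<leftarrow>rep. a * euler_char Q) = (\<Sum>(a, Q)\<leftarrow>rep. a * (\<Sum>y\<in>R. indicator_fun Q y * rs R y))"
    using assms(2) chiQ by (intro arg_cong[where f=sum_list] map_cong) auto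
  also have "\<dots> = (\<Sum>y\<in>R. (\<Sum>(a, Q)\<leftarrow>rep. a * indicator_fun Q y) * rs R y)" by (rule rep_sum)
  also have "\<dots> = (\<Sum>y\<in>R. f y * rs R y)" using assms(3) by (intro sum.cong) auto
  finally show ?thesis .
qed

lemma rep_exists:
  assumes "finite F"
  shows "\<exists>rep. (\<forall>(a,Q)\<in>set rep. is_filter (R::'a::order set) Q) \<and>
     (\<forall>x\<in>R. (\<Sum>(a, Q)\<leftarrow>rep. a * indicator_fun Q x) = (if x\<in>F then f x else 0))"
  using assms
proof (induction F rule: finite_induct)
  case empty
  show ?case by (intro exI[of _ "[]"]) simp
next
  case (insert y F)
  then obtain rep where r1: "\<forall>(a,Q)\<in>set rep. is_filter R Q"
    and r2: "\<forall>x\<in>R. (\<Sum>(a, Q)\<leftarrow>rep. a * indicator_fun Q x) = (if x\<in>F then f x else 0)" by blast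
  let ?rep = "(f y, {z\<in>R. y \<le> z}) # (- f y, {z\<in>R. y < z}) # rep"
  have "\<forall>(a,Q)\<in>set ?rep. is_filter R Q" using r1 filter_ge filter_gt by auto
  moreover have "\<forall>x\<in>R. (\<Sum>(a, Q)\<leftarrow>?rep. a * indicator_fun Q x) = (if x\<in>insert y F then f x else 0)"
  proof
    fix x assume x: "x \<in> R"
    have e: "indicator_fun {z\<in>R. y\<le>z} x - indicator_fun {z\<in>R. y<z} x = (if x = y then 1 else 0)"
      using x by (auto simp: indicator_fun_def less_le)
    have "(\<Sum>(a, Q)\<leftarrow>?rep. a * indicator_fun Q x)
       = f y * (indicator_fun {z\<in>R. y\<le>z} x - indicator_fun {z\<in>R. y<z} x) + (if x\<in>F then f x else 0)"
      using r2 x by (simp add: right_diff_distrib)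
    also have "\<dots> = (if x\<in>insert y F then f x else 0)"
      unfolding e using insert.hyps(2) by auto
    finally show "(\<Sum>(a, Q)\<leftarrow>?rep. a * indicator_fun Q x) = (if x\<in>insert y F then f x else 0)" .
  qed
  ultimately show ?case by blast
qed

lemma int_formula:
  assumes "finite (R::'a::order set)"
  shows "euler_integral R f = (\<Sum>y\<in>R. f y * rs R y)"
  unfolding euler_integral_def
proof (rule the_equality)
  obtain rep where r1: "\<forall>(a,Q)\<in>set rep. is_filter R Q"
    and r2: "\<forall>x\<in>R. (\<Sum>(a, Q)\<leftarrow>rep. a * indicator_fun Q x) = (if x\<in>R then f x else 0)"
    using rep_exists[OF assms, of R f] by blast
  have r3: "\<forall>x\<in>R. f x = (\<Sum>(a, Q)\<leftarrow>rep. a * indicator_fun Q x)" using r2 by simp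
  show "\<exists>rep. (\<forall>(a, Q)\<in>set rep. is_filter R Q) \<and>
          (\<forall>x\<in>R. f x = (\<Sum>(a, Q)\<leftarrow>rep. a * indicator_fun Q x)) \<and>
          (\<Sum>y\<in>R. f y * rs R y) = (\<Sum>(a, Q)\<leftarrow>rep. a * euler_char Q)"
    using r1 r3 rep_value[OF assms r1 r3] by (intro exI[of _ rep]) simp
next
  fix c assume "\<exists>rep. (\<forall>(a, Q)\<in>set rep. is_filter R Q) \<and>
          (\<forall>x\<in>R. f x = (\<Sum>(a, Q)\<leftarrow>rep. a * indicator_fun Q x)) \<and>
          c = (\<Sum>(a, Q)\<leftarrow>rep. a * euler_char Q)"
  then obtain rep where q1: "\<forall>(a, Q)\<in>set rep. is_filter R Q"
     and q2: "\<forall>x\<in>R. f x = (\<Sum>(a, Q)\<leftarrow>rep. a * indicator_fun Q x)"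
     and q3: "c = (\<Sum>(a, Q)\<leftarrow>rep. a * euler_char Q)" by blast
  show "c = (\<Sum>y\<in>R. f y * rs R y)" using rep_value[OF assms q1 q2] q3 by simp
qed

lemma chi_remove:
  "finite (S::'a::order set) \<Longrightarrow> x\<in>S \<Longrightarrow> euler_char {z\<in>S. x<z} = 1 \<Longrightarrow> euler_char (S - {x}) = euler_char S"
proof (induction "card S" arbitrary: S rule: less_induct)
  case less
  have trm: "euler_char {z\<in>S-{x}. y<z} = euler_char {z\<in>S. y<z}" if "y\<in>S-{x}" for y
  proof (cases "y<x")
    case True
    let ?T = "{z\<in>S. y<z}"
    have fT: "finite ?T" using less.prems(1) by simp
    have "card ?T < card S" using that less.prems(1) by (intro psubset_card_mono) auto
    moreover have "x\<in>?T" using True less.prems by auto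
    moreover have "{z\<in>?T. x<z} = {z\<in>S. x<z}" using True by (auto intro: less_trans)
    ultimately have "euler_char (?T - {x}) = euler_char ?T" using less.hyps fT less.prems(3) by auto
    moreover have "?T - {x} = {z\<in>S-{x}. y<z}" by auto
    ultimately show ?thesis by simp
  next
    case False
    then have "{z\<in>S-{x}. y<z} = {z\<in>S. y<z}" by auto
    then show ?thesis by simp
  qed
  have "euler_char S = (\<Sum>y\<in>S. 1 - euler_char {z\<in>S. y<z})" by (rule chi_rec[OF less.prems(1)])
  also have "\<dots> = (1 - euler_char {z\<in>S. x<z}) + (\<Sum>y\<in>S-{x}. 1 - euler_char {z\<in>S. y<z})"
    by (rule sum.remove[OF less.prems(1,2)])
  also have "\<dots> = (\<Sum>y\<in>S-{x}. 1 - euler_char {z\<in>S-{x}. y<z})"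
    using less.prems(3) trm by simp
  also have "\<dots> = euler_char (S-{x})" using chi_rec[of "S-{x}"] less.prems(1) by simp
  finally show ?case by simp
qed

lemma chi_term:
  assumes "finite (S::'a::order set)" "x\<in>S" "euler_char {z\<in>S. x<z} = 1" "y\<in>S-{x}"
  shows "euler_char {z\<in>S-{x}. y<z} = euler_char {z\<in>S. y<z}"
proof (cases "y<x")
  case True
  let ?T = "{z\<in>S. y<z}"
  have fT: "finite ?T" using assms(1) by simp
  have "x\<in>?T" using True assms by auto
  moreover have "{z\<in>?T. x<z} = {z\<in>S. x<z}" using True by (auto intro: less_trans)
  ultimately have "euler_char (?T - {x}) = euler_char ?T" using chi_remove[OF fT] assms(3) by auto
  moreover have "?T - {x} = {z\<in>S-{x}. y<z}" by auto
  ultimately show ?thesis by simp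
next
  case False
  then have "{z\<in>S-{x}. y<z} = {z\<in>S. y<z}" by auto
  then show ?thesis by simp
qed

lemma int_formula2:
  assumes "finite (R::'a::order set)"
  shows "euler_integral R f = (\<Sum>y\<in>R. f y * (1 - euler_char {z\<in>R. y<z}))"
  using int_formula[OF assms] rs_formula[OF assms] by simp

lemma int_remove:
  assumes "finite (R::'a::order set)" "chi_point R x"
  shows "euler_integral R f = euler_integral (R-{x}) f"
proof -
  have x: "x\<in>R" "euler_char {z\<in>R. x<z} = 1" using assms(2) by (auto simp: chi_point_def)
  have "euler_integral R f = (\<Sum>y\<in>R. f y * (1 - euler_char {z\<in>R. y<z}))" by (rule int_formula2[OF assms(1)])
  also have "\<dots> = f x * (1 - euler_char {z\<in>R. x<z}) + (\<Sum>y\<in>R-{x}. f y * (1 - euler_char {z\<in>R. y<z}))"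
    by (rule sum.remove[OF assms(1) x(1)])
  also have "\<dots> = (\<Sum>y\<in>R-{x}. f y * (1 - euler_char {z\<in>R-{x}. y<z}))"
    using x(2) chi_term[OF assms(1) x] by simp
  also have "\<dots> = euler_integral (R-{x}) f" using int_formula2[of "R-{x}"] assms(1) by simp
  finally show ?thesis .
qed

lemma reduction_int:
  assumes "chi_reduction P R" "finite (P::'a::order set)"
  shows "R \<subseteq> P \<and> euler_integral P f = euler_integral R f"
  using assms
proof (induction rule: chi_reduction.induct)
  case refl then show ?case by simp
next
  case (step R x)
  then have "R \<subseteq> P" "euler_integral P f = euler_integral R f" by auto
  moreover have "finite R" using \<open>R \<subseteq> P\<close> step.prems finite_subset by blast
  ultimately show ?case using int_remove[OF _ step.hyps(2)] by auto
qed

theorem corollary4p2: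
  fixes P Pchi :: "'a::order set" and h h' :: "'a \<Rightarrow> int"
  assumes "finite P"
    and "chi_minimal_model P Pchi"
    and "\<forall>x\<in>Pchi. h x = h' x"
  shows "euler_integral P h = euler_integral P h'"
proof -
  have red: "chi_reduction P Pchi" using assms(2) by (simp add: chi_minimal_model_def)
  have sub: "Pchi \<subseteq> P" using reduction_int[OF red assms(1)] by blast
  have fin: "finite Pchi" using sub assms(1) finite_subset by blast
  have "euler_integral P h = euler_integral Pchi h" using reduction_int[OF red assms(1)] by blast
  also have "\<dots> = euler_integral Pchi h'" using int_formula[OF fin] assms(3) by simp
  also have "\<dots> = euler_integral P h'" using reduction_int[OF red assms(1)] by metis
  finally show ?thesis .
qed

end
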